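(* Let $H$ be a finite group, $N \trianglelefteq H$, and $\pi : H \to H/N$ the projection. Let $M_1, \dots, M_k$ be maximal subgroups of $H$ in general position such that $\{M_1 \cap N, \dots, M_l \cap N\}$ is in general position and $M_j \supseteq \bigcap_{1 \leq i \leq l} (M_i \cap N)$ for every $j > l$. Let $R = \bigcap_{1 \leq i \leq l} M_i$. Then $l \leq \mathrm{MaxDim}(H) - \mathrm{MaxDim}(H/N, \pi(R))$. Moreover, if $N/\Phi(N)$ is abelian, then $l \leq \mathrm{MaxDim}(H) - \mathrm{MaxDim}(H/N)$ and $l \leq \mathrm{MaxDim}_H(N)$, where $H$ acts on $N$ by conjugation.
   Context: All groups are finite. A finite set $\{H_1,\dots,H_n\}$ of subgroups of a group $G$ is in general position if for every $1 \le j \le n$, $\bigcap_{i \neq j} H_i \supsetneq \bigcap_{i} H_i$. $\mathrm{MaxDim}(G)$ is the largest cardinality of a collection of maximal subgroups of $G$ in general position. For a subgroup $A \le G$, $\mathrm{MaxDim}(G, A)$ is the largest $k$ such that there exist maximal subgroups $M_1,\dots,M_k$ of $G$ with $\{M_1 \cap A, \dots, M_k \cap A\}$ in general position. If a group $B$ acts on $G$, $\mathrm{MaxDim}_B(G)$ is the largest cardinality of a collection of maximal $B$-invariant (proper) subgroups of $G$ that is in general position. $\Phi(N)$ is the Frattini subgroup of $N$, the intersection of all maximal subgroups of $N$. *)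

theory Defs
  imports "HOL-Algebra.Algebra"
begin

definition maximal_subgroup :: "('a, 'b) monoid_scheme \<Rightarrow> 'a set \<Rightarrow> bool" where
  "maximal_subgroup G M \<longleftrightarrow> subgroup M G \<and> M \<noteq> carrier G \<and>
     (\<forall>K. subgroup K G \<and> M \<subseteq> K \<longrightarrow> K = M \<or> K = carrier G)"

text \<open>General position of an indexed family of subgroups H i (i in I) of an ambient
  group with carrier A; an empty intersection is the ambient group A.\<close>
definition gen_pos :: "'a set \<Rightarrow> 'i set \<Rightarrow> ('i \<Rightarrow> 'a set) \<Rightarrow> bool" where
  "gen_pos A I H \<longleftrightarrow>
     (\<forall>j\<in>I. A \<inter> (\<Inter>i\<in>I - {j}. H i) \<supset> A \<inter> (\<Inter>i\<in>I. H i))"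

definition MaxDim :: "('a, 'b) monoid_scheme \<Rightarrow> nat" where
  "MaxDim G = Max {k. \<exists>M. (\<forall>i\<in>{1..k}. maximal_subgroup G (M i)) \<and>
                            gen_pos (carrier G) {1..k} M}"

definition MaxDim_rel :: "('a, 'b) monoid_scheme \<Rightarrow> 'a set \<Rightarrow> nat" where
  "MaxDim_rel G A = Max {k. \<exists>M. (\<forall>i\<in>{1..k}. maximal_subgroup G (M i)) \<and>
                            gen_pos A {1..k} (\<lambda>i. M i \<inter> A)}"

definition conj_invariant :: "('a, 'b) monoid_scheme \<Rightarrow> 'a set \<Rightarrow> 'a set \<Rightarrow> bool" where
  "conj_invariant H N K \<longleftrightarrow> subgroup K (H\<lparr>carrier := N\<rparr>) \<and>
     (\<forall>h\<in>carrier H. (\<lambda>x. h \<otimes>\<^bsub>H\<^esub> x \<otimes>\<^bsub>H\<^esub> inv\<^bsub>H\<^esub> h) ` K = K)"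

definition maximal_conj_invariant :: "('a, 'b) monoid_scheme \<Rightarrow> 'a set \<Rightarrow> 'a set \<Rightarrow> bool" where
  "maximal_conj_invariant H N K \<longleftrightarrow> conj_invariant H N K \<and> K \<noteq> N \<and>
     (\<forall>L. conj_invariant H N L \<and> L \<noteq> N \<and> K \<subseteq> L \<longrightarrow> L = K)"

definition MaxDim_conj :: "('a, 'b) monoid_scheme \<Rightarrow> 'a set \<Rightarrow> nat" where
  "MaxDim_conj H N = Max {k. \<exists>M. (\<forall>i\<in>{1..k}. maximal_conj_invariant H N (M i)) \<and>
                            gen_pos N {1..k} M}"

text \<open>Frattini subgroup: intersection of all maximal subgroups (the whole group if none).\<close>
definition frattini :: "('a, 'b) monoid_scheme \<Rightarrow> 'a set" where
  "frattini G = carrier G \<inter> \<Inter>{M. maximal_subgroup G M}"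

end

theory Submission
  imports Defs
begin


lemma gp_inj: assumes "gen_pos A I F" shows "inj_on F I"
proof (rule inj_onI, rule ccontr)
  fix i j assume ij: "i \<in> I" "j \<in> I" "F i = F j" "i \<noteq> j"
  have "(\<Inter>x\<in>I. F x) = (\<Inter>x\<in>I - {j}. F x)"
  proof
    show "(\<Inter>x\<in>I. F x) \<subseteq> (\<Inter>x\<in>I - {j}. F x)" by blast
    show "(\<Inter>x\<in>I - {j}. F x) \<subseteq> (\<Inter>x\<in>I. F x)"
    proof
      fix y assume y: "y \<in> (\<Inter>x\<in>I - {j}. F x)"
      then have "y \<in> F i" using ij by blast
      then have "y \<in> F j" using ij by simp
      then show "y \<in> (\<Inter>x\<in>I. F x)" using y by blast
    qed
  qed
  then show False using assms ij unfolding gen_pos_def by auto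
qed

lemma gp_bound:
  fixes k :: nat
  assumes "finite B" "gen_pos A {1..k} F" "\<forall>i\<in>{1..k}. F i \<subseteq> B"
  shows "k \<le> 2 ^ card B"
proof -
  have "card (F ` {1..k}) = k" using gp_inj[OF assms(2)] by (simp add: card_image)
  moreover have "F ` {1..k} \<subseteq> Pow B" using assms(3) by auto
  then have "card (F ` {1..k}) \<le> card (Pow B)" using assms(1) by (simp add: card_mono)
  ultimately show ?thesis using assms(1) by (simp add: card_Pow)
qed

lemma Max_bounded:
  fixes S :: "nat set"
  assumes "\<And>k. k \<in> S \<Longrightarrow> k \<le> b" "x \<in> S"
  shows "x \<le> Max S" "Max S \<in> S"
proof -
  have "finite S" using assms(1) finite_nat_set_iff_bounded_le by blast
  then show "x \<le> Max S" "Max S \<in> S" using assms(2) Max_in Max_ge by blast+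
qed

lemma MaxDim_ge:
  assumes "finite (carrier G)" "\<forall>i\<in>{1..k}. maximal_subgroup G (M i)" "gen_pos (carrier G) {1..k} M"
  shows "k \<le> MaxDim G"
proof -
  let ?S = "{k::nat. \<exists>M. (\<forall>i\<in>{1..k}. maximal_subgroup G (M i)) \<and> gen_pos (carrier G) {1..k} M}"
  have "\<And>k. k \<in> ?S \<Longrightarrow> k \<le> 2 ^ card (carrier G)"
  proof -
    fix k :: nat assume "k \<in> ?S"
    then obtain M where "\<forall>i\<in>{1..k}. maximal_subgroup G (M i)" "gen_pos (carrier G) {1..k} M" by blast
    moreover then have "\<forall>i\<in>{1..k}. M i \<subseteq> carrier G"
      unfolding maximal_subgroup_def using subgroup.subset by blast
    ultimately show "k \<le> 2 ^ card (carrier G)" using gp_bound assms(1) by blast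
  qed
  moreover have "k \<in> ?S" using assms by blast
  ultimately show ?thesis unfolding MaxDim_def by (rule Max_bounded)
qed

lemma MaxDim_rel_mem:
  assumes "finite A"
  shows "\<exists>M. (\<forall>i\<in>{1..MaxDim_rel G A}. maximal_subgroup G (M i)) \<and> gen_pos A {1..MaxDim_rel G A} (\<lambda>i. M i \<inter> A)"
proof -
  let ?S = "{k::nat. \<exists>M. (\<forall>i\<in>{1..k}. maximal_subgroup G (M i)) \<and> gen_pos A {1..k} (\<lambda>i. M i \<inter> A)}"
  have "\<And>k. k \<in> ?S \<Longrightarrow> k \<le> 2 ^ card A"
  proof -
    fix k :: nat assume "k \<in> ?S"
    then obtain M where "gen_pos A {1..k} (\<lambda>i. M i \<inter> A)" by blast
    then show "k \<le> 2 ^ card A" using gp_bound[of A A k "\<lambda>i. M i \<inter> A"] assms by blast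
  qed
  moreover have "0 \<in> ?S" unfolding gen_pos_def by auto
  ultimately have "Max ?S \<in> ?S" by (rule Max_bounded)
  then show ?thesis unfolding MaxDim_rel_def by blast
qed

lemma MaxDim_rel_carrier: "MaxDim_rel G (carrier G) = MaxDim G"
proof -
  have e: "\<And>I M. gen_pos (carrier G) I (\<lambda>i. M i \<inter> carrier G) = gen_pos (carrier G) I M"
    unfolding gen_pos_def by (intro ball_cong refl arg_cong2[where f="(\<subset>)"]) auto
  show ?thesis unfolding MaxDim_rel_def MaxDim_def e ..
qed

lemma MaxDim_conj_ge:
  assumes "finite N" "\<forall>i\<in>{1..k}. maximal_conj_invariant H N (M i)" "gen_pos N {1..k} M"
  shows "k \<le> MaxDim_conj H N"
proof -
  let ?S = "{k::nat. \<exists>M. (\<forall>i\<in>{1..k}. maximal_conj_invariant H N (M i)) \<and> gen_pos N {1..k} M}"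
  have "\<And>k. k \<in> ?S \<Longrightarrow> k \<le> 2 ^ card N"
  proof -
    fix k :: nat assume "k \<in> ?S"
    then obtain M where "\<forall>i\<in>{1..k}. maximal_conj_invariant H N (M i)" "gen_pos N {1..k} M" by blast
    moreover then have "\<forall>i\<in>{1..k}. M i \<subseteq> N"
      unfolding maximal_conj_invariant_def conj_invariant_def using subgroup.subset
      by (metis partial_object.select_convs(1) partial_object.surjective partial_object.update_convs(1))
    ultimately show "k \<le> 2 ^ card N" using gp_bound assms(1) by blast
  qed
  moreover have "k \<in> ?S" using assms by blast
  ultimately show ?thesis unfolding MaxDim_conj_def by (rule Max_bounded)
qed



lemma (in group) nprod_sub:
  assumes "S1 \<lhd> G" "subgroup S2 G" shows "subgroup (S1 <#> S2) G"
  using assms second_isomorphism_grp.normal_set_mult_subgroup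
  unfolding second_isomorphism_grp_def second_isomorphism_grp_axioms_def by blast

lemma (in group) set_multE:
  assumes "x \<in> S1 <#> S2" obtains a b where "a \<in> S1" "b \<in> S2" "x = a \<otimes> b"
  using assms unfolding set_mult_def by blast

lemma (in group) set_multI:
  assumes "a \<in> S1" "b \<in> S2" shows "a \<otimes> b \<in> S1 <#> S2"
  using assms unfolding set_mult_def by blast

lemma lift_max:
  fixes G (structure)
  assumes G: "group G" and N: "N \<lhd> G" and S2: "maximal_subgroup (G Mod N) S2"
  shows "maximal_subgroup G {g\<in>carrier G. N #> g \<in> S2} \<and> N \<subseteq> {g\<in>carrier G. N #> g \<in> S2}"
proof -
  interpret normal N G by (rule N)
  interpret Q: group "G Mod N" by (rule factorgroup_is_group)
  interpret hh: group_hom G "G Mod N" "\<lambda>a. N #> a"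
    by (unfold_locales) (rule r_coset_hom_Mod)
  define K where "K = {g\<in>carrier G. N #> g \<in> S2}"
  have Ys: "subgroup S2 (G Mod N)" and Yne: "S2 \<noteq> carrier (G Mod N)"
    and Ymax: "\<And>K. subgroup K (G Mod N) \<Longrightarrow> S2 \<subseteq> K \<Longrightarrow> K = S2 \<or> K = carrier (G Mod N)"
    using S2 unfolding maximal_subgroup_def by blast+
  have oneY: "N \<in> S2" using subgroup.one_closed[OF Ys] by simp
  have NK: "N \<subseteq> K"
  proof
    fix n assume n: "n \<in> N"
    then have "n \<in> carrier G" using subset by blast
    moreover have "N #> n = N" using coset_join2[OF _ is_subgroup n] calculation by blast
    ultimately show "n \<in> K" unfolding K_def using oneY by simp
  qed
  have Ks: "subgroup K G"
  proof (rule subgroupI)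
    show "K \<subseteq> carrier G" unfolding K_def by blast
    have "\<one> \<in> N" by (rule subgroup.one_closed[OF is_subgroup])
    then show "K \<noteq> {}" using NK by blast
  next
    fix a assume a: "a \<in> K"
    then have ac: "a \<in> carrier G" and aY: "N #> a \<in> S2" unfolding K_def by auto
    have "N #> inv a = inv\<^bsub>G Mod N\<^esub> (N #> a)" by (rule hh.hom_inv[OF ac])
    moreover have "inv\<^bsub>G Mod N\<^esub> (N #> a) \<in> S2" by (rule subgroup.m_inv_closed[OF Ys aY])
    ultimately show "inv a \<in> K" unfolding K_def using ac by simp
  next
    fix a b assume a: "a \<in> K" and b: "b \<in> K"
    then have ac: "a \<in> carrier G" and aY: "N #> a \<in> S2" 
      and bc: "b \<in> carrier G" and bY: "N #> b \<in> S2" unfolding K_def by auto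
    have "N #> (a \<otimes> b) = (N #> a) \<otimes>\<^bsub>G Mod N\<^esub> (N #> b)" by (rule hh.hom_mult[OF ac bc])
    moreover have "(N #> a) \<otimes>\<^bsub>G Mod N\<^esub> (N #> b) \<in> S2" by (rule subgroup.m_closed[OF Ys aY bY])
    ultimately show "a \<otimes> b \<in> K" unfolding K_def using ac bc by simp
  qed
  have Kne: "K \<noteq> carrier G"
  proof
    assume "K = carrier G"
    then have "carrier (G Mod N) \<subseteq> S2" unfolding K_def carrier_FactGroup
      by blast
    then show False using Yne subgroup.subset[OF Ys] by blast
  qed
  have "\<forall>K'. subgroup K' G \<and> K \<subseteq> K' \<longrightarrow> K' = K \<or> K' = carrier G"
  proof (intro allI impI)
    fix K' assume K': "subgroup K' G \<and> K \<subseteq> K'"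
    let ?S2' = "(\<lambda>a. N #> a) ` K'"
    have S2's: "subgroup ?S2' (G Mod N)" using hh.subgroup_img_is_subgroup K' by blast
    have "S2 \<subseteq> ?S2'"
    proof
      fix y assume y: "y \<in> S2"
      then have "y \<in> carrier (G Mod N)" using subgroup.subset[OF Ys] by blast
      then obtain g where g: "g \<in> carrier G" "y = N #> g" unfolding carrier_FactGroup by blast
      then have "g \<in> K" using y unfolding K_def by blast
      then show "y \<in> ?S2'" using g K' by blast
    qed
    then have "?S2' = S2 \<or> ?S2' = carrier (G Mod N)" using Ymax S2's by blast
    then show "K' = K \<or> K' = carrier G"
    proof
      assume "?S2' = S2"
      then have "K' \<subseteq> K" unfolding K_def using K' subgroup.subset by blast
      then show ?thesis using K' by blast
    next
      assume e: "?S2' = carrier (G Mod N)"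
      have "carrier G \<subseteq> K'"
      proof
        fix g assume g: "g \<in> carrier G"
        then have "N #> g \<in> ?S2'" unfolding e carrier_FactGroup by blast
        then obtain k where k: "k \<in> K'" "N #> g = N #> k" by blast
        have kc: "k \<in> carrier G" using k K' subgroup.subset by blast
        have "g \<in> N #> k" using rcos_self[OF g is_subgroup] k by simp
        then obtain n where n: "n \<in> N" "g = n \<otimes> k" unfolding r_coset_def by blast
        have "n \<in> K'" using n NK K' by blast
        then show "g \<in> K'" using n k K' subgroup.m_closed by metis
      qed
      then show ?thesis using K' subgroup.subset by blast
    qed
  qed
  then show ?thesis using Ks Kne NK unfolding maximal_subgroup_def K_def by blast
qed



lemma gp_intro:
  assumes "\<forall>j\<in>I. \<exists>x\<in>A. (\<forall>i\<in>I-{j}. x \<in> F i) \<and> x \<notin> F j"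
  shows "gen_pos A I F"
  unfolding gen_pos_def
proof
  fix j assume j: "j \<in> I"
  then obtain x where "x \<in> A" "\<forall>i\<in>I-{j}. x \<in> F i" "x \<notin> F j" using assms by blast
  then have "x \<in> A \<inter> (\<Inter>i\<in>I - {j}. F i)" "x \<notin> A \<inter> (\<Inter>i\<in>I. F i)" using j by auto
  then show "A \<inter> (\<Inter>i\<in>I - {j}. F i) \<supset> A \<inter> (\<Inter>i\<in>I. F i)" by blast
qed

lemma gp_elim:
  assumes "gen_pos A I F" "j \<in> I"
  shows "\<exists>x\<in>A. (\<forall>i\<in>I-{j}. x \<in> F i) \<and> x \<notin> F j"
proof -
  have "\<forall>j\<in>I. A \<inter> (\<Inter>i\<in>I - {j}. F i) \<supset> A \<inter> (\<Inter>i\<in>I. F i)"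
    using assms(1) unfolding gen_pos_def .
  then have "A \<inter> (\<Inter>i\<in>I - {j}. F i) \<supset> A \<inter> (\<Inter>i\<in>I. F i)" using assms(2) by (rule bspec)
  then obtain x where x: "x \<in> A \<inter> (\<Inter>i\<in>I - {j}. F i)" "x \<notin> A \<inter> (\<Inter>i\<in>I. F i)"
    using psubset_imp_ex_mem by blast
  have xA: "x \<in> A" and xi: "\<forall>i\<in>I-{j}. x \<in> F i" using x(1) by auto
  have "x \<notin> F j"
  proof
    assume "x \<in> F j"
    then have "\<forall>i\<in>I. x \<in> F i" using xi by blast
    then show False using x(2) xA by blast
  qed
  then show ?thesis using xA xi by blast
qed

lemma claim1:
  fixes H (structure)
  assumes grp: "group H" and fin: "finite (carrier H)" and nrm: "N \<lhd> H"
    and maxM: "\<forall>i\<in>{1..l}. maximal_subgroup H (M i)"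
    and gpN: "gen_pos N {1..l} (\<lambda>i. M i \<inter> N)"
  shows "l + MaxDim_rel (H Mod N) ((\<lambda>h. N #> h) ` (carrier H \<inter> (\<Inter>i\<in>{1..l}. M i))) \<le> MaxDim H"
proof -
  interpret normal N H by (rule nrm)
  define R where "R = carrier H \<inter> (\<Inter>i\<in>{1..l}. M i)"
  define A where "A = (\<lambda>h. N #> h) ` R"
  define m where "m = MaxDim_rel (H Mod N) A"
  have "finite A" unfolding A_def R_def using fin by blast
  then obtain Y where Ymax: "\<forall>i\<in>{1..m}. maximal_subgroup (H Mod N) (Y i)"
    and Ygp: "gen_pos A {1..m} (\<lambda>i. Y i \<inter> A)"
    using MaxDim_rel_mem unfolding m_def by blast
  define K where "K i = {g\<in>carrier H. N #> g \<in> Y i}" for i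
  have Kmax: "maximal_subgroup H (K i) \<and> N \<subseteq> K i" if "i \<in> {1..m}" for i
    unfolding K_def using lift_max[OF grp nrm] Ymax that by blast
  define F where "F i = (if i \<le> l then M i else K (i - l))" for i
  have Fmax: "\<forall>i\<in>{1..l+m}. maximal_subgroup H (F i)"
  proof
    fix i assume i: "i \<in> {1..l+m}"
    show "maximal_subgroup H (F i)"
    proof (cases "i \<le> l")
      case True then show ?thesis using maxM i unfolding F_def by auto
    next
      case False then have "i - l \<in> {1..m}" using i by auto
      then show ?thesis using Kmax False unfolding F_def by auto
    qed
  qed
  have Nc: "N \<subseteq> carrier H" by (rule subset)
  have Fgp: "gen_pos (carrier H) {1..l+m} F"
  proof (rule gp_intro, rule ballI)
    fix j assume j: "j \<in> {1..l+m}"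
    show "\<exists>x\<in>carrier H. (\<forall>i\<in>{1..l+m}-{j}. x \<in> F i) \<and> x \<notin> F j"
    proof (cases "j \<le> l")
      case True
      then have "j \<in> {1..l}" using j by auto
      from gp_elim[OF gpN this] obtain x where x: "x \<in> N" "\<forall>i\<in>{1..l}-{j}. x \<in> M i \<inter> N" "x \<notin> M j \<inter> N" by blast
      have "\<forall>i\<in>{1..l+m}-{j}. x \<in> F i"
      proof
        fix i assume i: "i \<in> {1..l+m}-{j}"
        show "x \<in> F i"
        proof (cases "i \<le> l")
          case True then show ?thesis using x i unfolding F_def by auto
        next
          case False then have "i - l \<in> {1..m}" using i by auto
          then show ?thesis using Kmax x False unfolding F_def by auto
        qed
      qed
      moreover have "x \<notin> F j" using x True unfolding F_def by auto
      ultimately show ?thesis using x Nc by blast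
    next
      case False
      then have j': "j - l \<in> {1..m}" using j by auto
      from gp_elim[OF Ygp this] obtain y where y: "y \<in> A" "\<forall>i\<in>{1..m}-{j-l}. y \<in> Y i \<inter> A" "y \<notin> Y (j-l) \<inter> A" by blast
      then obtain h where h: "h \<in> R" "y = N #> h" unfolding A_def by blast
      have hc: "h \<in> carrier H" using h unfolding R_def by blast
      have "\<forall>i\<in>{1..l+m}-{j}. h \<in> F i"
      proof
        fix i assume i: "i \<in> {1..l+m}-{j}"
        show "h \<in> F i"
        proof (cases "i \<le> l")
          case True then show ?thesis using h i unfolding F_def R_def by auto
        next
          case False2: False then have "i - l \<in> {1..m}-{j-l}" using i False by auto
          then have "y \<in> Y (i - l)" using y by blast
          then show ?thesis using h hc False2 unfolding F_def K_def by auto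
        qed
      qed
      moreover have "h \<notin> F j" using y h False unfolding F_def K_def by auto
      ultimately show ?thesis using hc by blast
    qed
  qed
  have "l + m \<le> MaxDim H" by (rule MaxDim_ge[OF fin Fmax Fgp])
  then show ?thesis unfolding m_def A_def R_def .
qed



lemma (in group) lcanc:
  assumes "g \<in> carrier G" "w \<in> carrier G" shows "inv g \<otimes> (g \<otimes> w) = w"
  using assms by (simp add: m_assoc[symmetric])

lemma (in group) conj_hom:
  assumes g: "g \<in> carrier G" shows "(\<lambda>y. g \<otimes> y \<otimes> inv g) \<in> hom G G"
proof (rule homI)
  fix x y assume x: "x \<in> carrier G" and y: "y \<in> carrier G"
  show "g \<otimes> x \<otimes> inv g \<in> carrier G" using g x by simp
  have "g \<otimes> x \<otimes> inv g \<otimes> (g \<otimes> y \<otimes> inv g) = g \<otimes> x \<otimes> (inv g \<otimes> g) \<otimes> y \<otimes> inv g"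
    using g x y by (simp add: m_assoc lcanc)
  also have "\<dots> = g \<otimes> (x \<otimes> y) \<otimes> inv g" using g x y by (simp add: m_assoc)
  finally show "g \<otimes> (x \<otimes> y) \<otimes> inv g = g \<otimes> x \<otimes> inv g \<otimes> (g \<otimes> y \<otimes> inv g)" by simp
qed

lemma (in group) conj_back:
  assumes g: "g \<in> carrier G" and y: "y \<in> carrier G"
  shows "g \<otimes> (inv g \<otimes> y \<otimes> g) \<otimes> inv g = y"
  using conjugation_is_surj[OF g y] .

lemma (in group) sub_iff:
  assumes "subgroup N G"
  shows "subgroup K (G\<lparr>carrier := N\<rparr>) \<longleftrightarrow> subgroup K G \<and> K \<subseteq> N"
proof
  assume a: "subgroup K (G\<lparr>carrier := N\<rparr>)"
  show "subgroup K G \<and> K \<subseteq> N"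
    using incl_subgroup[OF assms a] subgroup.subset[OF a] by simp
next
  assume "subgroup K G \<and> K \<subseteq> N"
  then show "subgroup K (G\<lparr>carrier := N\<rparr>)" using subgroup_incl assms by blast
qed

lemma (in group) max_sub_iff:
  assumes "subgroup N G"
  shows "maximal_subgroup (G\<lparr>carrier := N\<rparr>) M \<longleftrightarrow>
    (subgroup M G \<and> M \<subseteq> N \<and> M \<noteq> N \<and> (\<forall>K. subgroup K G \<and> K \<subseteq> N \<and> M \<subseteq> K \<longrightarrow> K = M \<or> K = N))"
  unfolding maximal_subgroup_def sub_iff[OF assms] by auto

lemma exists_max:
  assumes G: "group G" and fin: "finite (carrier G)" and K: "subgroup K G" and ne: "K \<noteq> carrier G"
  shows "\<exists>M. maximal_subgroup G M \<and> K \<subseteq> M"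
proof -
  define S where "S = {L. subgroup L G \<and> K \<subseteq> L \<and> L \<noteq> carrier G}"
  have "S \<subseteq> Pow (carrier G)" unfolding S_def using subgroup.subset by blast
  then have "finite S" by (rule finite_subset) (simp add: fin)
  moreover have "K \<in> S" unfolding S_def using K ne by blast
  ultimately have "\<exists>m\<in>S. \<forall>b\<in>S. m \<subseteq> b \<longrightarrow> m = b"
    by (intro finite_has_maximal) auto
  then obtain L where L: "L \<in> S" and Lm: "\<forall>b\<in>S. L \<subseteq> b \<longrightarrow> b = L" by metis
  have "maximal_subgroup G L" unfolding maximal_subgroup_def
  proof (intro conjI allI impI)
    show "subgroup L G" "L \<noteq> carrier G" using L unfolding S_def by auto
    fix K' assume K': "subgroup K' G \<and> L \<subseteq> K'"
    show "K' = L \<or> K' = carrier G"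
    proof (cases "K' = carrier G")
      case False
      then have "K' \<in> S" using K' L unfolding S_def by blast
      then show ?thesis using Lm K' by blast
    qed simp
  qed
  then show ?thesis using L unfolding S_def by blast
qed

lemma (in group) frattini_mem:
  "x \<in> frattini (G\<lparr>carrier := N\<rparr>) \<longleftrightarrow> x \<in> N \<and> (\<forall>M. maximal_subgroup (G\<lparr>carrier := N\<rparr>) M \<longrightarrow> x \<in> M)"
  unfolding frattini_def by auto

lemma (in group) conj_normal_closed:
  assumes "N \<lhd> G" "g \<in> carrier G" "x \<in> N" shows "g \<otimes> x \<otimes> inv g \<in> N"
  using assms normal_inv_iff by blast

lemma (in group) conj_max_pre:
  assumes nN: "N \<lhd> G" and g: "g \<in> carrier G" and M': "maximal_subgroup (G\<lparr>carrier := N\<rparr>) M'"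
  shows "maximal_subgroup (G\<lparr>carrier := N\<rparr>) {y\<in>N. g \<otimes> y \<otimes> inv g \<in> M'}"
proof -
  define \<phi> where "\<phi> = (\<lambda>y. g \<otimes> y \<otimes> inv g)"
  define P where "P = {y\<in>N. \<phi> y \<in> M'}"
  interpret hh: group_hom G G \<phi> unfolding \<phi>_def
    by (unfold_locales) (rule conj_hom[OF g])
  have sN: "subgroup N G" using nN normal_imp_subgroup by blast
  have Nc: "N \<subseteq> carrier G" using sN subgroup.subset by blast
  have M'1: "subgroup M' G" and M'2: "M' \<subseteq> N" and M'3: "M' \<noteq> N"
    and M'4: "\<And>K. subgroup K G \<Longrightarrow> K \<subseteq> N \<Longrightarrow> M' \<subseteq> K \<Longrightarrow> K = M' \<or> K = N"
    using M' unfolding max_sub_iff[OF sN] by blast+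
  have bk: "\<And>y. y \<in> N \<Longrightarrow> inv g \<otimes> y \<otimes> g \<in> N \<and> \<phi> (inv g \<otimes> y \<otimes> g) = y"
  proof -
    fix y assume y: "y \<in> N"
    have "inv g \<otimes> y \<otimes> inv (inv g) \<in> N" using conj_normal_closed[OF nN inv_closed[OF g] y] .
    then have "inv g \<otimes> y \<otimes> g \<in> N" using g by simp
    moreover have "\<phi> (inv g \<otimes> y \<otimes> g) = y" unfolding \<phi>_def using conj_back g y Nc by blast
    ultimately show "inv g \<otimes> y \<otimes> g \<in> N \<and> \<phi> (inv g \<otimes> y \<otimes> g) = y" by blast
  qed
  have phiN: "\<phi> ` N = N"
  proof
    show "\<phi> ` N \<subseteq> N" unfolding \<phi>_def using conj_normal_closed[OF nN g] by blast
    show "N \<subseteq> \<phi> ` N" using bk by (metis image_eqI subsetI)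
  qed
  have inj: "inj_on \<phi> (carrier G)" unfolding \<phi>_def inj_on_def using conjugation_is_inj g by blast
  have Ps: "subgroup P G"
  proof (rule subgroupI)
    show "P \<subseteq> carrier G" unfolding P_def using Nc by blast
    have "\<one> \<in> N" using sN subgroup.one_closed by blast
    moreover have "\<phi> \<one> \<in> M'" using hh.hom_one subgroup.one_closed[OF M'1] by simp
    ultimately show "P \<noteq> {}" unfolding P_def by blast
  next
    fix a assume a: "a \<in> P"
    then have ac: "a \<in> carrier G" using Nc unfolding P_def by blast
    have "inv a \<in> N" using a sN subgroup.m_inv_closed unfolding P_def by fastforce
    moreover have "\<phi> (inv a) = inv (\<phi> a)" using hh.hom_inv[OF ac] by simp
    moreover have "inv (\<phi> a) \<in> M'" using a subgroup.m_inv_closed[OF M'1] unfolding P_def by blast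
    ultimately show "inv a \<in> P" unfolding P_def by simp
  next
    fix a b assume a: "a \<in> P" and b: "b \<in> P"
    then have ac: "a \<in> carrier G" and bc: "b \<in> carrier G" using Nc unfolding P_def by blast+
    have "a \<otimes> b \<in> N" using a b sN subgroup.m_closed unfolding P_def by fastforce
    moreover have "\<phi> (a \<otimes> b) = \<phi> a \<otimes> \<phi> b" using hh.hom_mult[OF ac bc] by simp
    moreover have "\<phi> a \<otimes> \<phi> b \<in> M'" using a b subgroup.m_closed[OF M'1] unfolding P_def by blast
    ultimately show "a \<otimes> b \<in> P" unfolding P_def by simp
  qed
  have M'P: "M' \<subseteq> \<phi> ` P"
  proof
    fix m assume m: "m \<in> M'"
    then have "m \<in> N" using M'2 by blast
    from bk[OF this] have "inv g \<otimes> m \<otimes> g \<in> P" using m unfolding P_def by simp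
    then show "m \<in> \<phi> ` P" using bk[OF \<open>m \<in> N\<close>] by (metis image_eqI)
  qed
  have PN: "P \<noteq> N"
  proof
    assume "P = N"
    then have "\<phi> ` N \<subseteq> M'" unfolding P_def by blast
    then show False using phiN M'2 M'3 by blast
  qed
  have "\<forall>K. subgroup K G \<and> K \<subseteq> N \<and> P \<subseteq> K \<longrightarrow> K = P \<or> K = N"
  proof (intro allI impI)
    fix K assume K: "subgroup K G \<and> K \<subseteq> N \<and> P \<subseteq> K"
    have "subgroup (\<phi> ` K) G" using hh.subgroup_img_is_subgroup K by blast
    moreover have "\<phi> ` K \<subseteq> N" using K phiN by blast
    moreover have "M' \<subseteq> \<phi> ` K" using M'P K by blast
    ultimately have "\<phi> ` K = M' \<or> \<phi> ` K = N" using M'4 by blast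
    then show "K = P \<or> K = N"
    proof
      assume "\<phi> ` K = M'"
      then have "K \<subseteq> P" unfolding P_def using K by blast
      then show ?thesis using K by blast
    next
      assume "\<phi> ` K = N"
      then have "\<phi> ` K = \<phi> ` N" using phiN by simp
      moreover have "K \<subseteq> carrier G" using K Nc by blast
      ultimately have "K = N" using inj_on_image_eq_iff[OF inj _ Nc] by blast
      then show ?thesis by blast
    qed
  qed
  then have "maximal_subgroup (G\<lparr>carrier := N\<rparr>) P"
    unfolding max_sub_iff[OF sN] using Ps PN unfolding P_def by blast
  then show ?thesis unfolding P_def \<phi>_def .
qed



lemma (in group) frattini_normal:
  assumes nN: "N \<lhd> G" shows "frattini (G\<lparr>carrier := N\<rparr>) \<lhd> G"
proof -
  define F where "F = frattini (G\<lparr>carrier := N\<rparr>)"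
  have sN: "subgroup N G" using nN normal_imp_subgroup by blast
  have Nc: "N \<subseteq> carrier G" using sN subgroup.subset by blast
  have ms: "\<And>M. maximal_subgroup (G\<lparr>carrier := N\<rparr>) M \<Longrightarrow> subgroup M G"
    using max_sub_iff[OF sN] by blast
  have Fs: "subgroup F G"
  proof (rule subgroupI)
    show "F \<subseteq> carrier G" unfolding F_def frattini_def using Nc by auto
    have "\<forall>M. maximal_subgroup (G\<lparr>carrier := N\<rparr>) M \<longrightarrow> \<one> \<in> M"
      by (intro allI impI) (rule subgroup.one_closed[OF ms])
    then have "\<one> \<in> F" unfolding F_def frattini_mem using subgroup.one_closed[OF sN] by blast
    then show "F \<noteq> {}" by blast
  next
    fix a assume a: "a \<in> F"
    have "\<forall>M. maximal_subgroup (G\<lparr>carrier := N\<rparr>) M \<longrightarrow> inv a \<in> M"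
    proof (intro allI impI)
      fix M assume "maximal_subgroup (G\<lparr>carrier := N\<rparr>) M"
      moreover then have "a \<in> M" using a unfolding F_def frattini_mem by blast
      ultimately show "inv a \<in> M" by (rule subgroup.m_inv_closed[OF ms])
    qed
    moreover have "inv a \<in> N" using a unfolding F_def frattini_mem using subgroup.m_inv_closed[OF sN] by blast
    ultimately show "inv a \<in> F" unfolding F_def frattini_mem by blast
  next
    fix a b assume a: "a \<in> F" and b: "b \<in> F"
    have "\<forall>M. maximal_subgroup (G\<lparr>carrier := N\<rparr>) M \<longrightarrow> a \<otimes> b \<in> M"
    proof (intro allI impI)
      fix M assume "maximal_subgroup (G\<lparr>carrier := N\<rparr>) M"
      moreover then have "a \<in> M" "b \<in> M" using a b unfolding F_def frattini_mem by blast+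
      ultimately show "a \<otimes> b \<in> M" using subgroup.m_closed[OF ms] by blast
    qed
    moreover have "a \<otimes> b \<in> N" using a b unfolding F_def frattini_mem using subgroup.m_closed[OF sN] by blast
    ultimately show "a \<otimes> b \<in> F" unfolding F_def frattini_mem by blast
  qed
  have "\<forall>g\<in>carrier G. \<forall>x\<in>F. g \<otimes> x \<otimes> inv g \<in> F"
  proof (intro ballI)
    fix g x assume g: "g \<in> carrier G" and x: "x \<in> F"
    have xN: "x \<in> N" using x unfolding F_def frattini_mem by blast
    have "\<forall>M'. maximal_subgroup (G\<lparr>carrier := N\<rparr>) M' \<longrightarrow> g \<otimes> x \<otimes> inv g \<in> M'"
    proof (intro allI impI)
      fix M' assume M': "maximal_subgroup (G\<lparr>carrier := N\<rparr>) M'"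
      have "x \<in> {y\<in>N. g \<otimes> y \<otimes> inv g \<in> M'}"
        using x conj_max_pre[OF nN g M'] unfolding F_def frattini_mem by blast
      then show "g \<otimes> x \<otimes> inv g \<in> M'" by blast
    qed
    moreover have "g \<otimes> x \<otimes> inv g \<in> N" using conj_normal_closed[OF nN g xN] .
    ultimately show "g \<otimes> x \<otimes> inv g \<in> F" unfolding F_def frattini_mem by blast
  qed
  then show ?thesis unfolding F_def[symmetric] using normal_inv_iff Fs by blast
qed

lemma (in group) frattini_le_max:
  assumes nN: "N \<lhd> G" and fin: "finite (carrier G)" and M: "maximal_subgroup G M"
  shows "frattini (G\<lparr>carrier := N\<rparr>) \<subseteq> M"
proof (rule ccontr)
  define F where "F = frattini (G\<lparr>carrier := N\<rparr>)"
  assume nsub: "\<not> frattini (G\<lparr>carrier := N\<rparr>) \<subseteq> M"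
  then obtain x where x: "x \<in> F" "x \<notin> M" unfolding F_def by blast
  have sN: "subgroup N G" using nN normal_imp_subgroup by blast
  have Nc: "N \<subseteq> carrier G" using sN subgroup.subset by blast
  have FN: "F \<subseteq> N" unfolding F_def using frattini_mem by blast
  have Ms: "subgroup M G" and Mne: "M \<noteq> carrier G"
    and Mmax: "\<And>K. subgroup K G \<Longrightarrow> M \<subseteq> K \<Longrightarrow> K = M \<or> K = carrier G"
    using M unfolding maximal_subgroup_def by blast+
  have NM: "\<not> N \<subseteq> M" using nsub FN unfolding F_def by blast
  have Fn: "F \<lhd> G" unfolding F_def by (rule frattini_normal[OF nN])
  have Fs: "subgroup F G" using Fn normal_imp_subgroup by blast
  have one: "\<one> \<in> F" using Fs subgroup.one_closed by blast
  have PM: "subgroup (F <#> M) G" by (rule nprod_sub[OF Fn Ms])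
  have "M \<subseteq> F <#> M"
  proof
    fix m assume m: "m \<in> M"
    then have "\<one> \<otimes> m \<in> F <#> M" using set_multI one by blast
    moreover have "\<one> \<otimes> m = m" using subgroup.mem_carrier[OF Ms m] by simp
    ultimately show "m \<in> F <#> M" by simp
  qed
  moreover have "F <#> M \<noteq> M"
  proof
    assume e: "F <#> M = M"
    have "x \<otimes> \<one> \<in> F <#> M" using set_multI x(1) subgroup.one_closed[OF Ms] by blast
    moreover have "x \<otimes> \<one> = x" using subgroup.mem_carrier[OF Fs x(1)] by simp
    ultimately have "x \<in> F <#> M" by simp
    then show False using e x(2) by blast
  qed
  ultimately have FMc: "F <#> M = carrier G" using Mmax PM by blast
  have NMs: "subgroup (N \<inter> M) G" using subgroups_Inter_pair sN Ms by blast
  have NsubFNM: "N \<subseteq> F <#> (N \<inter> M)"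
  proof
    fix n assume n: "n \<in> N"
    then have "n \<in> F <#> M" using FMc Nc by blast
    then obtain a b where ab: "a \<in> F" "b \<in> M" "n = a \<otimes> b" by (rule set_multE)
    have ac: "a \<in> carrier G" using ab FN Nc by blast
    have bc: "b \<in> carrier G" using subgroup.mem_carrier[OF Ms ab(2)] .
    have "b = inv a \<otimes> n" using ab(3) lcanc[OF ac bc] by simp
    moreover have "inv a \<in> N" using ab(1) FN subgroup.m_inv_closed[OF sN] by blast
    moreover have "inv a \<otimes> n \<in> N" using calculation(2) n subgroup.m_closed[OF sN] by blast
    ultimately have "b \<in> N \<inter> M" using ab by simp
    then show "n \<in> F <#> (N \<inter> M)" using ab set_multI by blast
  qed
  have gN: "group (G\<lparr>carrier := N\<rparr>)" using subgroup_imp_group[OF sN] .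
  have "subgroup (N \<inter> M) (G\<lparr>carrier := N\<rparr>)" using sub_iff[OF sN] NMs by blast
  moreover have "N \<inter> M \<noteq> carrier (G\<lparr>carrier := N\<rparr>)" using NM by auto
  moreover have "finite (carrier (G\<lparr>carrier := N\<rparr>))" using finite_subset[OF Nc fin] by simp
  ultimately obtain M' where M': "maximal_subgroup (G\<lparr>carrier := N\<rparr>) M'" "N \<inter> M \<subseteq> M'"
    using exists_max[OF gN] by blast
  have FM': "F \<subseteq> M'" using M'(1) frattini_mem unfolding F_def by blast
  have M's: "subgroup M' G" and M'N: "M' \<subseteq> N" and M'ne: "M' \<noteq> N"
    using M'(1) unfolding max_sub_iff[OF sN] by blast+
  have "N \<subseteq> M'"
  proof
    fix n assume "n \<in> N"
    then have "n \<in> F <#> (N \<inter> M)" using NsubFNM by blast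
    then obtain a b where "a \<in> F" "b \<in> N \<inter> M" "n = a \<otimes> b" by (rule set_multE)
    then have "a \<in> M'" "b \<in> M'" using FM' M'(2) by blast+
    then show "n \<in> M'" using \<open>n = a \<otimes> b\<close> subgroup.m_closed[OF M's] by blast
  qed
  then show False using M'N M'ne by blast
qed



lemma rc_upd: "r_coset (G\<lparr>carrier := N\<rparr>) F a = r_coset G F a"
  unfolding r_coset_def by simp

lemma sm_upd: "set_mult (G\<lparr>carrier := N\<rparr>) A B = set_mult G A B"
  unfolding set_mult_def by simp

lemma (in group) comm_conj:
  assumes comm: "comm_group ((G\<lparr>carrier := N\<rparr>) Mod F)" and F1: "\<one> \<in> F" and FK: "F \<subseteq> K"
    and Ks: "subgroup K G" and KN: "K \<subseteq> N" and Nc: "N \<subseteq> carrier G" and n: "n \<in> N" and k: "k \<in> K"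
  shows "n \<otimes> k \<otimes> inv n \<in> K"
proof -
  have nc: "n \<in> carrier G" using n Nc by blast
  have kN: "k \<in> N" using k KN by blast
  have kc: "k \<in> carrier G" using kN Nc by blast
  have car: "\<And>a. a \<in> N \<Longrightarrow> F #> a \<in> carrier ((G\<lparr>carrier := N\<rparr>) Mod F)"
    unfolding FactGroup_def RCOSETS_def rc_upd by auto
  have cmon: "comm_monoid ((G\<lparr>carrier := N\<rparr>) Mod F)" using comm unfolding comm_group_def by blast
  have e: "(F #> n) <#> (F #> k) = (F #> k) <#> (F #> n)"
    using comm_monoid.m_comm[OF cmon car[OF n] car[OF kN]]
    unfolding FactGroup_def rc_upd by (simp add: sm_upd)
  have nin: "n \<in> F #> n" unfolding r_coset_def using F1 nc by force
  have kin: "k \<in> F #> k" unfolding r_coset_def using F1 kc by force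
  have "n \<otimes> k \<in> (F #> k) <#> (F #> n)" using set_multI[OF nin kin] e by simp
  then obtain p q where pq: "p \<in> F #> k" "q \<in> F #> n" "n \<otimes> k = p \<otimes> q" by (rule set_multE)
  obtain a where a: "a \<in> F" "p = a \<otimes> k" using pq(1) unfolding r_coset_def by blast
  obtain b where b: "b \<in> F" "q = b \<otimes> n" using pq(2) unfolding r_coset_def by blast
  have aK: "a \<in> K" and bK: "b \<in> K" using a b FK by blast+
  have ac: "a \<in> carrier G" and bc: "b \<in> carrier G" using aK bK KN Nc by blast+
  have "n \<otimes> k \<otimes> inv n = (a \<otimes> k) \<otimes> (b \<otimes> n) \<otimes> inv n" using pq(3) a b by simp
  also have "\<dots> = a \<otimes> k \<otimes> b" using ac bc nc kc by (simp add: m_assoc)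
  finally show ?thesis using aK bK k subgroup.m_closed[OF Ks] by metis
qed

lemma (in group) NM_carrier:
  assumes nN: "N \<lhd> G" and M: "maximal_subgroup G M" and NM: "\<not> N \<subseteq> M"
  shows "N <#> M = carrier G"
proof -
  have Ms: "subgroup M G"
    and Mmax: "\<And>K. subgroup K G \<Longrightarrow> M \<subseteq> K \<Longrightarrow> K = M \<or> K = carrier G"
    using M unfolding maximal_subgroup_def by blast+
  have sN: "subgroup N G" using nN normal_imp_subgroup by blast
  have PM: "subgroup (N <#> M) G" by (rule nprod_sub[OF nN Ms])
  have "M \<subseteq> N <#> M"
  proof
    fix m assume m: "m \<in> M"
    then have "\<one> \<otimes> m \<in> N <#> M" using set_multI subgroup.one_closed[OF sN] by blast
    moreover have "\<one> \<otimes> m = m" using subgroup.mem_carrier[OF Ms m] by simp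
    ultimately show "m \<in> N <#> M" by simp
  qed
  moreover have "N <#> M \<noteq> M"
  proof
    assume e: "N <#> M = M"
    obtain x where x: "x \<in> N" "x \<notin> M" using NM by blast
    have "x \<otimes> \<one> \<in> N <#> M" using set_multI x(1) subgroup.one_closed[OF Ms] by blast
    moreover have "x \<otimes> \<one> = x" using subgroup.mem_carrier[OF sN x(1)] by simp
    ultimately have "x \<in> N <#> M" by simp
    then show False using e x(2) by blast
  qed
  ultimately show ?thesis using Mmax PM by blast
qed

lemma (in group) MN_normal:
  assumes nN: "N \<lhd> G" and fin: "finite (carrier G)" and M: "maximal_subgroup G M" and NM: "\<not> N \<subseteq> M"
    and comm: "comm_group ((G\<lparr>carrier := N\<rparr>) Mod (frattini (G\<lparr>carrier := N\<rparr>)))"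
  shows "M \<inter> N \<lhd> G"
proof -
  define F where "F = frattini (G\<lparr>carrier := N\<rparr>)"
  have Ms: "subgroup M G" using M unfolding maximal_subgroup_def by blast
  have sN: "subgroup N G" using nN normal_imp_subgroup by blast
  have Nc: "N \<subseteq> carrier G" using sN subgroup.subset by blast
  have MNs: "subgroup (M \<inter> N) G" using subgroups_Inter_pair Ms sN by blast
  have F1: "\<one> \<in> F" unfolding F_def using frattini_normal[OF nN] normal_imp_subgroup subgroup.one_closed by blast
  have FK: "F \<subseteq> M \<inter> N" unfolding F_def using frattini_le_max[OF nN fin M] frattini_mem by blast
  have cm: "N <#> M = carrier G" by (rule NM_carrier[OF nN M NM])
  have "\<forall>g\<in>carrier G. \<forall>k\<in>M \<inter> N. g \<otimes> k \<otimes> inv g \<in> M \<inter> N"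
  proof (intro ballI)
    fix g k assume g: "g \<in> carrier G" and k: "k \<in> M \<inter> N"
    then obtain n m where nm: "n \<in> N" "m \<in> M" "g = n \<otimes> m" using cm set_multE by (metis)
    have nc: "n \<in> carrier G" using nm Nc by blast
    have mc: "m \<in> carrier G" using subgroup.mem_carrier[OF Ms nm(2)] .
    have kc: "k \<in> carrier G" using k Nc by blast
    have k'M: "m \<otimes> k \<otimes> inv m \<in> M" using nm(2) k subgroup.m_closed[OF Ms] subgroup.m_inv_closed[OF Ms] by blast
    have k'N: "m \<otimes> k \<otimes> inv m \<in> N" using conj_normal_closed[OF nN mc] k by blast
    have "n \<otimes> (m \<otimes> k \<otimes> inv m) \<otimes> inv n \<in> M \<inter> N"
      by (rule comm_conj[OF comm[folded F_def] F1 FK MNs _ Nc nm(1)]) (use k'M k'N in auto)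
    moreover have "g \<otimes> k \<otimes> inv g = n \<otimes> (m \<otimes> k \<otimes> inv m) \<otimes> inv n"
      using nm(3) nc mc kc by (simp add: inv_mult_group m_assoc)
    ultimately show "g \<otimes> k \<otimes> inv g \<in> M \<inter> N" by simp
  qed
  then show ?thesis using normal_inv_iff MNs by blast
qed

lemma (in group) normal_conj_inv:
  assumes P: "P \<lhd> G" and PN: "P \<subseteq> N" and sN: "subgroup N G"
  shows "conj_invariant G N P"
  unfolding conj_invariant_def
proof (intro conjI ballI)
  have Ps: "subgroup P G" using P normal_imp_subgroup by blast
  then show "subgroup P (G\<lparr>carrier := N\<rparr>)" using sub_iff[OF sN] PN by blast
  fix h assume h: "h \<in> carrier G"
  show "(\<lambda>x. h \<otimes> x \<otimes> inv h) ` P = P"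
  proof
    show "(\<lambda>x. h \<otimes> x \<otimes> inv h) ` P \<subseteq> P" using conj_normal_closed[OF P h] by blast
    show "P \<subseteq> (\<lambda>x. h \<otimes> x \<otimes> inv h) ` P"
    proof
      fix x assume x: "x \<in> P"
      have xc: "x \<in> carrier G" using subgroup.mem_carrier[OF Ps x] .
      have "inv h \<otimes> x \<otimes> inv (inv h) \<in> P" using conj_normal_closed[OF P inv_closed[OF h] x] .
      then have "inv h \<otimes> x \<otimes> h \<in> P" using h by simp
      moreover have "x = h \<otimes> (inv h \<otimes> x \<otimes> h) \<otimes> inv h" using conj_back[OF h xc] by simp
      ultimately show "x \<in> (\<lambda>x. h \<otimes> x \<otimes> inv h) ` P" by blast
    qed
  qed
qed

lemma (in group) conj_inv_normal:
  assumes L: "conj_invariant G N L" and sN: "subgroup N G"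
  shows "L \<lhd> G" "L \<subseteq> N"
proof -
  have "subgroup L (G\<lparr>carrier := N\<rparr>)" using L unfolding conj_invariant_def by blast
  then have Ls: "subgroup L G" and LN: "L \<subseteq> N" using sub_iff[OF sN] by blast+
  have "\<forall>h\<in>carrier G. \<forall>x\<in>L. h \<otimes> x \<otimes> inv h \<in> L"
  proof (intro ballI)
    fix h x assume h: "h \<in> carrier G" and x: "x \<in> L"
    have "(\<lambda>x. h \<otimes> x \<otimes> inv h) ` L = L" using L h unfolding conj_invariant_def by blast
    then show "h \<otimes> x \<otimes> inv h \<in> L" using x by blast
  qed
  then show "L \<lhd> G" using normal_inv_iff Ls by blast
  show "L \<subseteq> N" by (rule LN)
qed

lemma (in group) K_maxinv:
  assumes nN: "N \<lhd> G" and M: "maximal_subgroup G M" and NM: "\<not> N \<subseteq> M" and Kn: "M \<inter> N \<lhd> G"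
  shows "maximal_conj_invariant G N (M \<inter> N)"
  unfolding maximal_conj_invariant_def
proof (intro conjI allI impI)
  have Ms: "subgroup M G"
    and Mmax: "\<And>K. subgroup K G \<Longrightarrow> M \<subseteq> K \<Longrightarrow> K = M \<or> K = carrier G"
    using M unfolding maximal_subgroup_def by blast+
  have sN: "subgroup N G" using nN normal_imp_subgroup by blast
  have Nc: "N \<subseteq> carrier G" using sN subgroup.subset by blast
  show "conj_invariant G N (M \<inter> N)" using normal_conj_inv[OF Kn _ sN] by blast
  show "M \<inter> N \<noteq> N" using NM by blast
  fix L assume L: "conj_invariant G N L \<and> L \<noteq> N \<and> M \<inter> N \<subseteq> L"
  have Ln: "L \<lhd> G" and LN: "L \<subseteq> N" using conj_inv_normal L sN by blast+
  have Ls: "subgroup L G" using Ln normal_imp_subgroup by blast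
  have PM: "subgroup (L <#> M) G" by (rule nprod_sub[OF Ln Ms])
  have "M \<subseteq> L <#> M"
  proof
    fix m assume m: "m \<in> M"
    then have "\<one> \<otimes> m \<in> L <#> M" using set_multI subgroup.one_closed[OF Ls] by blast
    moreover have "\<one> \<otimes> m = m" using subgroup.mem_carrier[OF Ms m] by simp
    ultimately show "m \<in> L <#> M" by simp
  qed
  then have "L <#> M = M \<or> L <#> M = carrier G" using Mmax PM by blast
  then show "L = M \<inter> N"
  proof
    assume e: "L <#> M = M"
    have "L \<subseteq> M"
    proof
      fix x assume x: "x \<in> L"
      have "x \<otimes> \<one> \<in> L <#> M" using set_multI x subgroup.one_closed[OF Ms] by blast
      moreover have "x \<otimes> \<one> = x" using subgroup.mem_carrier[OF Ls x] by simp
      ultimately show "x \<in> M" using e by simp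
    qed
    then show ?thesis using L LN by blast
  next
    assume e: "L <#> M = carrier G"
    have "N \<subseteq> L"
    proof
      fix n assume n: "n \<in> N"
      then have "n \<in> L <#> M" using e Nc by blast
      then obtain a b where ab: "a \<in> L" "b \<in> M" "n = a \<otimes> b" by (rule set_multE)
      have ac: "a \<in> carrier G" using subgroup.mem_carrier[OF Ls ab(1)] .
      have bc: "b \<in> carrier G" using subgroup.mem_carrier[OF Ms ab(2)] .
      have "b = inv a \<otimes> n" using ab(3) lcanc[OF ac bc] by simp
      moreover have "inv a \<in> N" using ab(1) LN subgroup.m_inv_closed[OF sN] by blast
      moreover have "inv a \<otimes> n \<in> N" using calculation(2) n subgroup.m_closed[OF sN] by blast
      ultimately have "b \<in> M \<inter> N" using ab by simp
      then have "b \<in> L" using L by blast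
      then show "n \<in> L" using ab subgroup.m_closed[OF Ls] by blast
    qed
    then show ?thesis using L LN by blast
  qed
qed



lemma (in group) cover:
  fixes l :: nat
  assumes nN: "N \<lhd> G"
    and maxM: "\<forall>i\<in>{1..l}. maximal_subgroup G (M i)"
    and NM: "\<forall>i\<in>{1..l}. \<not> N \<subseteq> M i"
    and Kn: "\<forall>i\<in>{1..l}. M i \<inter> N \<lhd> G"
    and Kmi: "\<forall>i\<in>{1..l}. maximal_conj_invariant G N (M i \<inter> N)"
    and gp: "gen_pos N {1..l} (\<lambda>i. M i \<inter> N)"
    and h: "h \<in> carrier G"
  shows "\<exists>n\<in>N. \<forall>i\<in>{1..l}. n \<otimes> h \<in> M i"
proof -
  have sN: "subgroup N G" using nN normal_imp_subgroup by blast
  have Nc: "N \<subseteq> carrier G" using sN subgroup.subset by blast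
  define L where "L j = N \<inter> (\<Inter>i\<in>{1..l}-{j}. M i \<inter> N)" for j
  have Ln: "L j \<lhd> G" for j
  proof -
    let ?A = "insert N ((\<lambda>i. M i \<inter> N) ` ({1..l}-{j}))"
    have "\<And>S. S \<in> ?A \<Longrightarrow> subgroup S G" using sN Kn normal_imp_subgroup by auto
    then have "subgroup (\<Inter>?A) G" by (rule subgroups_Inter) blast+
    moreover have "\<Inter>?A = L j" unfolding L_def by auto
    ultimately have Ls: "subgroup (L j) G" by simp
    have "\<forall>g\<in>carrier G. \<forall>x\<in>L j. g \<otimes> x \<otimes> inv g \<in> L j"
    proof (intro ballI)
      fix g x assume g: "g \<in> carrier G" and x: "x \<in> L j"
      have "g \<otimes> x \<otimes> inv g \<in> N" using x conj_normal_closed[OF nN g] unfolding L_def by blast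
      moreover have "\<forall>i\<in>{1..l}-{j}. g \<otimes> x \<otimes> inv g \<in> M i \<inter> N"
      proof
        fix i assume i: "i \<in> {1..l}-{j}"
        then have "x \<in> M i \<inter> N" using x unfolding L_def by blast
        then show "g \<otimes> x \<otimes> inv g \<in> M i \<inter> N" using conj_normal_closed[OF _ g] Kn i by blast
      qed
      ultimately show "g \<otimes> x \<otimes> inv g \<in> L j" unfolding L_def by blast
    qed
    then show ?thesis using normal_inv_iff Ls by blast
  qed
  have LN: "L j \<subseteq> N" for j unfolding L_def by blast
  have KL: "(M j \<inter> N) <#> L j = N" if j: "j \<in> {1..l}" for j
  proof (rule ccontr)
    assume ne: "(M j \<inter> N) <#> L j \<noteq> N"
    define P where "P = (M j \<inter> N) <#> L j"
    have Pn: "P \<lhd> G" unfolding P_def using normal_subgroup_set_mult_closed Kn j Ln by blast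
    have PN: "P \<subseteq> N"
    proof
      fix x assume "x \<in> P"
      then obtain a b where ab: "a \<in> M j \<inter> N" "b \<in> L j" "x = a \<otimes> b" unfolding P_def by (rule set_multE)
      then show "x \<in> N" using LN subgroup.m_closed[OF sN] by blast
    qed
    have Pci: "conj_invariant G N P" by (rule normal_conj_inv[OF Pn PN sN])
    have KP: "M j \<inter> N \<subseteq> P"
    proof
      fix x assume x: "x \<in> M j \<inter> N"
      have "\<one> \<in> L j" using Ln normal_imp_subgroup subgroup.one_closed by blast
      then have "x \<otimes> \<one> \<in> P" unfolding P_def using set_multI x by blast
      moreover have "x \<otimes> \<one> = x" using x Nc by auto
      ultimately show "x \<in> P" by simp
    qed
    have "P = M j \<inter> N" using Kmi j Pci ne KP unfolding maximal_conj_invariant_def P_def by blast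
    moreover obtain x where x: "x \<in> N" "\<forall>i\<in>{1..l}-{j}. x \<in> M i \<inter> N" "x \<notin> M j \<inter> N"
      using gp_elim[OF gp j] by blast
    have "x \<in> L j" unfolding L_def using x by blast
    moreover have "\<one> \<in> M j \<inter> N" using Kn j normal_imp_subgroup subgroup.one_closed by blast
    ultimately have "\<one> \<otimes> x \<in> P" unfolding P_def using set_multI by blast
    moreover have "\<one> \<otimes> x = x" using x Nc by auto
    ultimately have "x \<in> P" by simp
    then show False using x \<open>P = M j \<inter> N\<close> by blast
  qed
  have step: "\<exists>ll\<in>L j. ll \<otimes> g \<in> M j" if j: "j \<in> {1..l}" and g: "g \<in> carrier G" for j g
  proof -
    have Ms: "subgroup (M j) G" using maxM j unfolding maximal_subgroup_def by blast
    have "g \<in> N <#> M j" using NM_carrier[OF nN] maxM NM j g by blast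
    then obtain n m where nm: "n \<in> N" "m \<in> M j" "g = n \<otimes> m" by (rule set_multE)
    have nc: "n \<in> carrier G" using nm Nc by blast
    have mc: "m \<in> carrier G" using subgroup.mem_carrier[OF Ms nm(2)] .
    have "inv n \<in> N" using nm subgroup.m_inv_closed[OF sN] by blast
    then have "inv n \<in> (M j \<inter> N) <#> L j" using KL[OF j] by simp
    then obtain k ll where kl: "k \<in> M j \<inter> N" "ll \<in> L j" "inv n = k \<otimes> ll" by (rule set_multE)
    have kc: "k \<in> carrier G" using kl Nc by blast
    have lc: "ll \<in> carrier G" using kl LN Nc by blast
    have "ll = inv k \<otimes> inv n" using kl(3) lcanc[OF kc lc] by simp
    then have "ll \<otimes> g = inv k \<otimes> (inv n \<otimes> (n \<otimes> m))" using nm(3) kc nc mc by (simp add: m_assoc)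
    also have "\<dots> = inv k \<otimes> m" using nc mc by (simp add: m_assoc[symmetric])
    finally have "ll \<otimes> g \<in> M j" using kl(1) nm(2) subgroup.m_closed[OF Ms] subgroup.m_inv_closed[OF Ms] by simp
    then show ?thesis using kl(2) by blast
  qed
  have "J \<subseteq> {1..l} \<Longrightarrow> \<exists>n\<in>N. \<forall>i\<in>J. n \<otimes> h \<in> M i" if "finite J" for J
    using that
  proof (induction J rule: finite_induct)
    case empty
    then show ?case using subgroup.one_closed[OF sN] by blast
  next
    case (insert j J)
    then obtain n where n: "n \<in> N" "\<forall>i\<in>J. n \<otimes> h \<in> M i" by blast
    have j: "j \<in> {1..l}" using insert by blast
    have nc: "n \<in> carrier G" using n Nc by blast
    have nhc: "n \<otimes> h \<in> carrier G" using nc h by simp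
    obtain ll where l: "ll \<in> L j" "ll \<otimes> (n \<otimes> h) \<in> M j" using step[OF j nhc] by blast
    have lc: "ll \<in> carrier G" using l LN Nc by blast
    have e: "(ll \<otimes> n) \<otimes> h = ll \<otimes> (n \<otimes> h)" using lc nc h by (simp add: m_assoc)
    have "\<forall>i\<in>insert j J. (ll \<otimes> n) \<otimes> h \<in> M i"
    proof
      fix i assume i: "i \<in> insert j J"
      show "(ll \<otimes> n) \<otimes> h \<in> M i"
      proof (cases "i = j")
        case True then show ?thesis using l e by simp
      next
        case False
        then have iJ: "i \<in> J" and il: "i \<in> {1..l}" using i insert by auto
        have Ms: "subgroup (M i) G" using maxM il unfolding maximal_subgroup_def by blast
        have "ll \<in> M i" using l(1) il False unfolding L_def by blast
        then show ?thesis using e n(2) iJ subgroup.m_closed[OF Ms] by simp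
      qed
    qed
    moreover have "ll \<otimes> n \<in> N" using l(1) LN n(1) subgroup.m_closed[OF sN] by blast
    ultimately show ?case by blast
  qed
  from this[of "{1..l}"] show ?thesis by simp
qed



theorem proposition3p3:
  fixes H (structure) and N :: "'a set" and M :: "nat \<Rightarrow> 'a set" and k l :: nat
  assumes "group H" and "finite (carrier H)" and "N \<lhd> H"
    and "l \<le> k"
    and "\<forall>i\<in>{1..k}. maximal_subgroup H (M i)"
    and "gen_pos (carrier H) {1..k} M"
    and "gen_pos N {1..l} (\<lambda>i. M i \<inter> N)"
    and "\<forall>j\<in>{l+1..k}. N \<inter> (\<Inter>i\<in>{1..l}. M i \<inter> N) \<subseteq> M j"
  defines "R \<equiv> carrier H \<inter> (\<Inter>i\<in>{1..l}. M i)"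
  shows "int l \<le> int (MaxDim H) - int (MaxDim_rel (H Mod N) ((\<lambda>h. N #> h) ` R)) \<and>
    (comm_group ((H\<lparr>carrier := N\<rparr>) Mod (frattini (H\<lparr>carrier := N\<rparr>))) \<longrightarrow>
           int l \<le> int (MaxDim H) - int (MaxDim (H Mod N)) \<and> l \<le> MaxDim_conj H N)"
proof -
  interpret group H by (rule assms(1))
  have sN: "subgroup N H" using assms(3) normal_imp_subgroup by blast
  have Nc: "N \<subseteq> carrier H" using sN subgroup.subset by blast
  have maxl: "\<forall>i\<in>{1..l}. maximal_subgroup H (M i)" using assms(5) assms(4) by auto
  have p1: "l + MaxDim_rel (H Mod N) ((\<lambda>h. N #> h) ` R) \<le> MaxDim H"
    unfolding R_def by (rule claim1[OF assms(1,2,3) maxl assms(7)])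
  have p2: "int l \<le> int (MaxDim H) - int (MaxDim (H Mod N)) \<and> l \<le> MaxDim_conj H N"
    if comm: "comm_group ((H\<lparr>carrier := N\<rparr>) Mod (frattini (H\<lparr>carrier := N\<rparr>)))"
  proof -
    have NM: "\<forall>i\<in>{1..l}. \<not> N \<subseteq> M i"
    proof
      fix j assume j: "j \<in> {1..l}"
      obtain x where "x \<in> N" "x \<notin> M j \<inter> N" using gp_elim[OF assms(7) j] by blast
      then show "\<not> N \<subseteq> M j" by blast
    qed
    have Kn: "\<forall>i\<in>{1..l}. M i \<inter> N \<lhd> H"
      using MN_normal[OF assms(3) assms(2) _ _ comm] maxl NM by blast
    have Kmi: "\<forall>i\<in>{1..l}. maximal_conj_invariant H N (M i \<inter> N)"
      using K_maxinv[OF assms(3)] maxl NM Kn by blast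
    have finN: "finite N" using finite_subset[OF Nc assms(2)] .
    have c1: "l \<le> MaxDim_conj H N"
      by (rule MaxDim_conj_ge[where M="\<lambda>i. M i \<inter> N"]) (use finN Kmi assms(7) in auto)
    have "(\<lambda>h. N #> h) ` R = carrier (H Mod N)"
    proof
      show "(\<lambda>h. N #> h) ` R \<subseteq> carrier (H Mod N)" unfolding carrier_FactGroup R_def by blast
      show "carrier (H Mod N) \<subseteq> (\<lambda>h. N #> h) ` R"
      proof
        fix y assume "y \<in> carrier (H Mod N)"
        then obtain h where h: "h \<in> carrier H" "y = N #> h" unfolding carrier_FactGroup by blast
        obtain n where n: "n \<in> N" "\<forall>i\<in>{1..l}. n \<otimes> h \<in> M i"
          using cover[OF assms(3) maxl NM Kn Kmi assms(7) h(1)] by blast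
        have nc: "n \<in> carrier H" using n Nc by blast
        have "n \<otimes> h \<in> R" unfolding R_def using n nc h by blast
        moreover have "N #> (n \<otimes> h) = N #> h"
          using coset_mult_assoc[OF Nc nc h(1)] coset_join2[OF nc sN n(1)] by simp
        ultimately show "y \<in> (\<lambda>h. N #> h) ` R" using h by (metis image_eqI)
      qed
    qed
    then have "MaxDim_rel (H Mod N) ((\<lambda>h. N #> h) ` R) = MaxDim (H Mod N)"
      using MaxDim_rel_carrier by simp
    then show ?thesis using p1 c1 by simp
  qed
  show ?thesis using p1 p2 by auto
qed



end
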